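(* Let $k\in\mathbb{Z}$ and let $p$ be a positive integer. Then $$\sum_{\nu=0}^{p}\binom{p}{\nu}\frac{E_{\nu}^{(k)}}{p-\nu+2}=\frac{1}{p+1}E_{p+1}^{(k)}(1)-\frac{1}{(p+1)(p+2)}E_{p+2}^{(k)}(1)+\frac{1}{(p+1)(p+2)}E_{p+2}^{(k)}.$$
   Context: For $k\in\mathbb{Z}$, $\mathrm{Ei}_k(x)=\sum_{n=1}^{\infty}\frac{x^n}{n^k(n-1)!}$; the poly-Genocchi polynomials $G_n^{(k)}(x)$ are defined by $\frac{2\,\mathrm{Ei}_k(\log(1+t))}{e^t+1}e^{xt}=\sum_{n=0}^{\infty}G_n^{(k)}(x)\frac{t^n}{n!}$; the poly-Euler polynomials are $E_n^{(k)}(x)=\frac{G_{n+1}^{(k)}(x)}{n+1}$ ($n\ge0$), and $E_n^{(k)}=E_n^{(k)}(0)$. *)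

theory Defs
  imports "HOL-Computational_Algebra.Formal_Power_Series"
begin

definition Ei_fps :: "int \<Rightarrow> real fps" where
  "Ei_fps k = Abs_fps (\<lambda>n. if n = 0 then 0
      else 1 / ((of_nat n) powi k * fact (n - 1)))"

definition log1p_fps :: "real fps" where
  "log1p_fps = Abs_fps (\<lambda>n. if n = 0 then 0 else (-1) ^ (n + 1) / of_nat n)"

definition polyGenocchi_gf :: "int \<Rightarrow> real \<Rightarrow> real fps" where
  "polyGenocchi_gf k x =
     fps_const 2 * (Ei_fps k oo log1p_fps) * inverse (fps_exp 1 + 1) * fps_exp x"

definition polyGenocchi :: "int \<Rightarrow> nat \<Rightarrow> real \<Rightarrow> real" where
  "polyGenocchi k n x = fact n * fps_nth (polyGenocchi_gf k x) n"

definition polyEuler :: "int \<Rightarrow> nat \<Rightarrow> real \<Rightarrow> real" where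
  "polyEuler k n x = polyGenocchi k (n + 1) x / of_nat (n + 1)"

end

theory Submission imports Defs begin
lemma gf_shift: "polyGenocchi_gf k x = polyGenocchi_gf k 0 * fps_exp x"
  unfolding polyGenocchi_gf_def by simp
lemma G0: "polyGenocchi k 0 x = 0"
proof -
  have "fps_nth (Ei_fps k oo log1p_fps) 0 = 0"
    by (simp add: fps_compose_def Ei_fps_def)
  then show ?thesis
    unfolding polyGenocchi_def polyGenocchi_gf_def by (simp add: mult.assoc)
qed
lemma A: "polyGenocchi k n x = fact n * (\<Sum>j=0..n. fps_nth (polyGenocchi_gf k 0) j * (x ^ (n - j) / fact (n - j)))"
    unfolding polyGenocchi_def by (subst gf_shift) (simp add: fps_mult_nth fps_exp_nth)
lemma B: assumes "j \<le> n" shows "fact n * (fps_nth (polyGenocchi_gf k 0) j * (x ^ (n - j) / fact (n - j))) =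
      of_nat (n choose j) * polyGenocchi k j 0 * x ^ (n - j)"
  unfolding polyGenocchi_def binomial_fact[OF assms] by (simp add: field_simps)
lemma G_appell:
  "polyGenocchi k n x = (\<Sum>j=0..n. of_nat (n choose j) * polyGenocchi k j 0 * x ^ (n - j))"
  unfolding A[of k n x] sum_distrib_left by (rule sum.cong[OF refl], rule B) simp

lemma E_appell:
  "polyEuler k n x = (\<Sum>i=0..n. of_nat (n choose i) * polyEuler k i 0 * x ^ (n - i))"
proof -
  have "polyEuler k n x = (\<Sum>j=0..Suc n. of_nat (Suc n choose j) * polyGenocchi k j 0 * x ^ (Suc n - j)) / of_nat (Suc n)"
    by (simp only: polyEuler_def Suc_eq_plus1[symmetric] G_appell[of k "Suc n" x])
  also have "(\<Sum>j=0..Suc n. of_nat (Suc n choose j) * polyGenocchi k j 0 * x ^ (Suc n - j))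
     = (\<Sum>i=0..n. of_nat (Suc n choose Suc i) * polyGenocchi k (Suc i) 0 * x ^ (n - i))"
    by (subst sum.atLeast0_atMost_Suc_shift) (simp add: G0)
  also have "\<dots> / of_nat (Suc n) = (\<Sum>i=0..n. of_nat (n choose i) * polyEuler k i 0 * x ^ (n - i))"
    unfolding sum_divide_distrib
  proof (rule sum.cong[OF refl])
    fix i
    have e: "real (Suc n choose Suc i) = real (Suc n) * real (n choose i) / real (Suc i)"
      by (metis Suc_times_binomial_eq of_nat_mult nonzero_mult_div_cancel_right of_nat_eq_0_iff nat.distinct(1))
    show "of_nat (Suc n choose Suc i) * polyGenocchi k (Suc i) 0 * x ^ (n - i) / of_nat (Suc n) =
         of_nat (n choose i) * polyEuler k i 0 * x ^ (n - i)"
      unfolding polyEuler_def e by (simp del: of_nat_Suc)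
  qed
  finally show ?thesis .
qed
lemma atom1:
  fixes F A B u v s t :: real
  assumes "A \<noteq> 0" "B \<noteq> 0" "u \<noteq> 0" "v \<noteq> 0" "s \<noteq> 0" "t \<noteq> 0" "v = u + 1"
  shows "F / (A * B) / v = s * F / (A * (u * B)) / s - t * s * F / (A * (v * u * B)) / (s * t)"
proof -
  have 1: "s * F / (A * (u * B)) / s = F / (A * B * u)" using assms by (simp add: field_simps)
  have 2: "t * s * F / (A * (v * u * B)) / (s * t) = F / (A * B * u * v)" using assms(1-6) by (simp add: field_simps)
  have 3: "F / (A * B) / v = F / (A * B * u) - F / (A * B * u * v)"
    using assms(1-3) assms(4)[unfolded assms(7)] unfolding assms(7) by (simp add: divide_simps) (simp add: algebra_simps)
  show ?thesis unfolding 1 2 3 ..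
qed

lemma coef_aux:
  fixes F A B x y :: real
  assumes "A > 0" "B > 0" "x \<ge> 0" "y \<ge> 0"
  shows "F / (A * B) / (x + y - x + 2) =
    (x + y + 1) * F / (A * ((y + 1) * B)) / (x + y + 1)
    - (x + y + 2) * (x + y + 1) * F / (A * ((y + 2) * (y + 1) * B)) / ((x + y + 1) * (x + y + 2))"
proof -
  have e: "x + y - x + 2 = y + 2" by simp
  show ?thesis unfolding e
    by (rule atom1) (use assms in linarith)+
qed

lemma fin:
  fixes D1 D2 S1 S2 a1 a2 :: real
  assumes "D1 \<noteq> 0" "D2 \<noteq> 0"
  shows "S1 / D1 - S2 / (D1 * D2) = (S1 + a1) / D1 - (S2 + D2 * a1 + a2) / (D1 * D2) + a2 / (D1 * D2)"
  using assms by (simp add: field_simps)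

lemma coef:
  assumes "i \<le> p"
  shows "real (p choose i) / (real p - real i + 2) =
    real (Suc p choose i) / (real p + 1) - real (Suc (Suc p) choose i) / ((real p + 1) * (real p + 2))"
proof -
  obtain m where p: "p = i + m" using assms le_Suc_ex by blast
  have f1: "fact (Suc (i+m)) = (real i + real m + 1) * fact (i+m)" by (simp add: fact_Suc)
  have f2: "fact (Suc (Suc (i+m))) = (real i + real m + 2) * (real i + real m + 1) * fact (i+m)" by (simp add: fact_Suc algebra_simps)
  have g1: "fact (Suc m) = (real m + 1) * fact m" by (simp add: fact_Suc)
  have g2: "fact (Suc (Suc m)) = (real m + 2) * (real m + 1) * fact m" by (simp add: fact_Suc algebra_simps)
  have b0: "real (i + m choose i) = fact (i+m) / (fact i * fact m)" by (simp add: binomial_fact)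
  have b1: "real (Suc (i + m) choose i) = fact (Suc (i+m)) / (fact i * fact (Suc m))"
    by (simp add: binomial_fact Suc_diff_le)
  have b2: "real (Suc (Suc (i + m)) choose i) = fact (Suc (Suc (i+m))) / (fact i * fact (Suc (Suc m)))"
    by (subst binomial_fact) (auto simp: Suc_diff_le)
  have "real (i+m) = real i + real m" by simp
  show ?thesis unfolding p b0 b1 b2 f1 f2 g1 g2 of_nat_add
    by (rule coef_aux) auto
qed

theorem lemma9:
  fixes k :: int and p :: nat
  assumes "p > 0"
  shows "(\<Sum>\<nu>=0..p. of_nat (p choose \<nu>) * polyEuler k \<nu> 0 / (of_nat p - of_nat \<nu> + 2))
    = polyEuler k (p + 1) 1 / (of_nat p + 1)
      - polyEuler k (p + 2) 1 / ((of_nat p + 1) * (of_nat p + 2))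
      + polyEuler k (p + 2) 0 / ((of_nat p + 1) * (of_nat p + 2))"
proof -
  define a where "a i = polyEuler k i 0" for i
  define S1 where "S1 = (\<Sum>i=0..p. real (Suc p choose i) * a i)"
  define S2 where "S2 = (\<Sum>i=0..p. real (Suc (Suc p) choose i) * a i)"
  have e0: "polyEuler k (p+2) 0 = a (Suc (Suc p))"
    by (simp add: a_def)
  have e1: "polyEuler k (p + 1) 1 = S1 + a (Suc p)"
    unfolding E_appell[of k "p+1" 1] S1_def by (simp add: a_def)
  have e2: "polyEuler k (p + 2) 1 = S2 + real (p+2) * a (Suc p) + a (Suc (Suc p))"
    unfolding E_appell[of k "p+2" 1] S2_def by (simp add: a_def numeral_2_eq_2)
  have "(\<Sum>\<nu>=0..p. of_nat (p choose \<nu>) * polyEuler k \<nu> 0 / (of_nat p - of_nat \<nu> + 2))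
     = (\<Sum>i=0..p. real (Suc p choose i) * a i / (real p + 1)
          - real (Suc (Suc p) choose i) * a i / ((real p + 1) * (real p + 2)))"
  proof (rule sum.cong[OF refl])
    fix x assume "x \<in> {0..p}"
    then have c: "real (p choose x) / (real p - real x + 2) =
      real (Suc p choose x) / (real p + 1) - real (Suc (Suc p) choose x) / ((real p + 1) * (real p + 2))"
      by (intro coef) simp
    have "of_nat (p choose x) * polyEuler k x 0 / (of_nat p - of_nat x + 2)
       = (real (p choose x) / (real p - real x + 2)) * a x" by (simp add: a_def)
    also have "\<dots> = (real (Suc p choose x) / (real p + 1) - real (Suc (Suc p) choose x) / ((real p + 1) * (real p + 2))) * a x"
      by (simp only: c)
    also have "\<dots> = real (Suc p choose x) * a x / (real p + 1)
          - real (Suc (Suc p) choose x) * a x / ((real p + 1) * (real p + 2))"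
      by (simp add: left_diff_distrib)
    finally show "of_nat (p choose x) * polyEuler k x 0 / (of_nat p - of_nat x + 2) =
          real (Suc p choose x) * a x / (real p + 1)
          - real (Suc (Suc p) choose x) * a x / ((real p + 1) * (real p + 2))" .
  qed
  also have "\<dots> = S1 / (real p + 1) - S2 / ((real p + 1) * (real p + 2))"
    unfolding sum_subtractf S1_def S2_def sum_divide_distrib ..
  finally have lhs: "(\<Sum>\<nu>=0..p. of_nat (p choose \<nu>) * polyEuler k \<nu> 0 / (of_nat p - of_nat \<nu> + 2))
     = S1 / (real p + 1) - S2 / ((real p + 1) * (real p + 2))" .
  have r: "real (p + 2) = real p + 2" by simp
  show ?thesis
    unfolding lhs e0 e1 e2 r
    by (rule fin) linarith+
qed

end
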